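(* Let $\nu_1,\nu_2>0$ and $\alpha,\beta\ge 0$ be real numbers. Let $X$ and $Y$ be independent random variables with values in $\mathbb{N}=\{0,1,2,\dots\}$ such that $P(X=x)=f(x)>0$ and $P(Y=y)=g(y)>0$ for all $x,y\in\mathbb{N}$. Suppose that for every $s\in\mathbb{N}$, the conditional distribution of $X$ given $X+Y=s$ is the extended negative hypergeometric distribution $\mathrm{ENHG}(s,\nu_1,\nu_2,\alpha,\beta)$, i.e. $$P(X=k\mid X+Y=s)=\frac{\{\Gamma(\nu_1+k)\Gamma(\nu_2+s-k)\}^\beta}{[k!(s-k)!]^\alpha}\Big/ E(s,\nu_1,\nu_2,\alpha,\beta),\qquad k=0,1,\dots,s,$$ where $E(s,\nu_1,\nu_2,\alpha,\beta)=\sum_{x=0}^s \frac{\{\Gamma(\nu_1+x)\Gamma(\nu_2+s-x)\}^\beta}{[x!(s-x)!]^\alpha}$. Then there exists $p>0$ such that $X\sim \mathrm{ECOMP}(\nu_1,p,\alpha,\beta)$ and $Y\sim\mathrm{ECOMP}(\nu_2,p,\alpha,\beta)$, i.e. $$P(X=x)=P(X=0)\frac{[\Gamma(\nu_1+x)]^\beta}{[\Gamma(\nu_1)]^\beta (x!)^\alpha}p^x,\qquad P(Y=y)=P(Y=0)\frac{[\Gamma(\nu_2+y)]^\beta}{[\Gamma(\nu_2)]^\beta (y!)^\alpha}p^y$$ for all $x,y\in\mathbb{N}$.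
   Context: A random variable $X$ follows the extended COM-Poisson distribution $\mathrm{ECOMP}(\nu,p,\alpha,\beta)$ if $$P(X=k)=\frac{[\Gamma(\nu+k)]^\beta}{[\Gamma(\nu)]^\beta (k!)^\alpha}\,p^k\cdot\frac{1}{S(\nu,p,\alpha,\beta)},\qquad k=0,1,2,\dots,$$ where $S(\nu,p,\alpha,\beta)=\sum_{k=0}^\infty \frac{[\Gamma(\nu+k)]^\beta}{[\Gamma(\nu)]^\beta (k!)^\alpha}p^k$ is the (finite) normalizing constant; the parameter space is $(\nu\ge0,p>0,\alpha>\beta\ge0)\cup(\nu>0,0<p<1,\alpha=\beta\ge0)$. *)

theory Defs
  imports "HOL-Probability.Probability"
begin

definition enhg_weight :: "nat \<Rightarrow> real \<Rightarrow> real \<Rightarrow> real \<Rightarrow> real \<Rightarrow> nat \<Rightarrow> real" where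
  "enhg_weight s nu1 nu2 alpha beta k =
     (Gamma (nu1 + real k) * Gamma (nu2 + real (s - k))) powr beta
     / (fact k * fact (s - k)) powr alpha"

definition enhg_norm :: "nat \<Rightarrow> real \<Rightarrow> real \<Rightarrow> real \<Rightarrow> real \<Rightarrow> real" where
  "enhg_norm s nu1 nu2 alpha beta = (\<Sum>x\<le>s. enhg_weight s nu1 nu2 alpha beta x)"

definition enhg_pmf :: "nat \<Rightarrow> real \<Rightarrow> real \<Rightarrow> real \<Rightarrow> real \<Rightarrow> nat \<Rightarrow> real" where
  "enhg_pmf s nu1 nu2 alpha beta k =
     enhg_weight s nu1 nu2 alpha beta k / enhg_norm s nu1 nu2 alpha beta"

definition ecomp_weight :: "real \<Rightarrow> real \<Rightarrow> real \<Rightarrow> real \<Rightarrow> nat \<Rightarrow> real" where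
  "ecomp_weight nu p alpha beta x =
     Gamma (nu + real x) powr beta / (Gamma nu powr beta * fact x powr alpha) * p ^ x"

end

theory Submission imports Defs begin
lemma indep_pt:
  assumes "prob_space M" "prob_space.indep_var M (count_space UNIV) X (count_space UNIV) Y"
  shows "measure M {\<omega> \<in> space M. X \<omega> = (a::nat) \<and> Y \<omega> = (b::nat)}
     = measure M {\<omega> \<in> space M. X \<omega> = a} * measure M {\<omega> \<in> space M. Y \<omega> = b}"
proof -
  interpret prob_space M by fact
  have i: "indep_set (sigma_sets (space M) { X -` A \<inter> space M | A. A \<in> sets (count_space UNIV)})
      (sigma_sets (space M) { Y -` A \<inter> space M | A. A \<in> sets (count_space UNIV)})"
    using assms(2) indep_var_eq by blast
  have a: "X -` {a} \<inter> space M \<in> sigma_sets (space M) { X -` A \<inter> space M | A. A \<in> sets (count_space UNIV)}"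
    by (rule sigma_sets.Basic) auto
  have b: "Y -` {b} \<inter> space M \<in> sigma_sets (space M) { Y -` A \<inter> space M | A. A \<in> sets (count_space UNIV)}"
    by (rule sigma_sets.Basic) auto
  have "prob ((X -` {a} \<inter> space M) \<inter> (Y -` {b} \<inter> space M)) = prob (X -` {a} \<inter> space M) * prob (Y -` {b} \<inter> space M)"
    by (rule indep_setD[OF i a b])
  moreover have "(X -` {a} \<inter> space M) \<inter> (Y -` {b} \<inter> space M) = {\<omega> \<in> space M. X \<omega> = a \<and> Y \<omega> = b}" by auto
  moreover have "X -` {a} \<inter> space M = {\<omega> \<in> space M. X \<omega> = a}" "Y -` {b} \<inter> space M = {\<omega> \<in> space M. Y \<omega> = b}" by auto
  ultimately show ?thesis by (simp only:)
qed

lemma gstep: "nu > 0 \<Longrightarrow> Gamma (nu + real (Suc k)) = (nu + real k) * Gamma (nu + real k)"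
proof -
  assume "nu > 0"
  hence "nu + real k \<notin> \<int>\<^sub>\<le>\<^sub>0" using nonpos_Ints_nonpos by fastforce
  hence "Gamma (nu + real k + 1) = (nu + real k) * Gamma (nu + real k)" by (rule Gamma_plus1)
  moreover have "nu + real (Suc k) = nu + real k + 1" by simp
  ultimately show ?thesis by metis
qed

lemma cross:
  fixes f g h :: "nat \<Rightarrow> real"
  assumes "prob_space M" "prob_space.indep_var M (count_space UNIV) X (count_space UNIV) Y"
    and f: "f = (\<lambda>x. measure M {\<omega> \<in> space M. X \<omega> = x})"
    and g: "g = (\<lambda>x. measure M {\<omega> \<in> space M. Y \<omega> = x})"
    and nu: "nu1 > 0" "nu2 > 0"
    and H: "\<And>s k. k \<le> s \<Longrightarrow>
           measure M {\<omega> \<in> space M. X \<omega> = k \<and> X \<omega> + Y \<omega> = s}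
             / measure M {\<omega> \<in> space M. X \<omega> + Y \<omega> = s}
           = enhg_pmf s nu1 nu2 alpha beta k"
    and k: "k \<le> s" "k' \<le> s"
  shows "f k * g (s-k) * enhg_weight s nu1 nu2 alpha beta k' = f k' * g (s-k') * enhg_weight s nu1 nu2 alpha beta k"
proof -
  define h where "h = measure M {\<omega> \<in> space M. X \<omega> + Y \<omega> = s}"
  have gp: "\<And>j. Gamma (nu1 + real j) > 0" "\<And>j. Gamma (nu2 + real j) > 0"
    using nu by (auto intro!: Gamma_real_pos add_pos_nonneg)
  have wpos: "\<And>j. enhg_weight s nu1 nu2 alpha beta j > 0"
  proof -
    fix j
    have "Gamma (nu1 + real j) > 0" "Gamma (nu2 + real (s-j)) > 0" using gp by auto
    thus "enhg_weight s nu1 nu2 alpha beta j > 0" unfolding enhg_weight_def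
      by (intro divide_pos_pos) (auto simp: powr_gt_zero)
  qed
    
  have Epos: "enhg_norm s nu1 nu2 alpha beta > 0"
    unfolding enhg_norm_def by (rule sum_pos) (auto intro: wpos)
  have eq: "\<And>j. j \<le> s \<Longrightarrow> f j * g (s-j) / h = enhg_weight s nu1 nu2 alpha beta j / enhg_norm s nu1 nu2 alpha beta"
  proof -
    fix j assume j: "j \<le> s"
    have "{\<omega> \<in> space M. X \<omega> = j \<and> X \<omega> + Y \<omega> = s} = {\<omega> \<in> space M. X \<omega> = j \<and> Y \<omega> = s - j}"
      using j by auto
    hence "measure M {\<omega> \<in> space M. X \<omega> = j \<and> X \<omega> + Y \<omega> = s} = f j * g (s-j)"
      using indep_pt[OF assms(1,2)] f g by simp
    thus "f j * g (s-j) / h = enhg_weight s nu1 nu2 alpha beta j / enhg_norm s nu1 nu2 alpha beta"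
      using H[OF j] h_def enhg_pmf_def by simp
  qed
  have hnz: "h \<noteq> 0"
  proof
    assume "h = 0"
    then have "enhg_weight s nu1 nu2 alpha beta k / enhg_norm s nu1 nu2 alpha beta = 0" using eq[OF k(1)] by simp
    thus False using wpos[of k] Epos by simp
  qed
  have e1: "f k * g (s-k) = h * enhg_weight s nu1 nu2 alpha beta k / enhg_norm s nu1 nu2 alpha beta"
    using eq[OF k(1)] hnz by (simp add: field_simps)
  have e2: "f k' * g (s-k') = h * enhg_weight s nu1 nu2 alpha beta k' / enhg_norm s nu1 nu2 alpha beta"
    using eq[OF k(2)] hnz by (simp add: field_simps)
  show ?thesis unfolding e1 mult.assoc[symmetric] by (subst e2) (simp add: field_simps)
qed

lemma ecw_step:
  assumes "nu > 0"
  shows "ecomp_weight nu p alpha beta (Suc k) = ecomp_weight nu p alpha beta k * (p * (nu + real k) powr beta / (real k + 1) powr alpha)"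
proof -
  have g: "Gamma (nu + real k) > 0" "Gamma nu > 0" using assms by (auto intro!: Gamma_real_pos add_pos_nonneg)
  have "Gamma (nu + real (Suc k)) powr beta = (nu + real k) powr beta * Gamma (nu + real k) powr beta"
    using gstep[OF assms, of k] g assms by (simp add: powr_mult)
  moreover have "fact (Suc k) powr alpha = (real k + 1) powr alpha * (fact k :: real) powr alpha"
    by (simp add: powr_mult add.commute)
  ultimately show ?thesis unfolding ecomp_weight_def using g
    by (simp add: field_simps)
qed

lemma wX:
  assumes "nu1 > 0" "nu2 > 0"
  shows "enhg_weight (Suc k) nu1 nu2 alpha beta (Suc k) * nu2 powr beta * (real k + 1) powr alpha
     = enhg_weight (Suc k) nu1 nu2 alpha beta k * (nu1 + real k) powr beta"
proof -
  have g: "Gamma (nu1 + real k) > 0" "Gamma nu2 > 0" using assms by (auto intro!: Gamma_real_pos add_pos_nonneg)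
  have a: "enhg_weight (Suc k) nu1 nu2 alpha beta (Suc k) = (nu1 + real k) powr beta * Gamma (nu1 + real k) powr beta * Gamma nu2 powr beta / ((real k + 1) powr alpha * (fact k) powr alpha)"
    unfolding enhg_weight_def using gstep[OF assms(1), of k] g assms
    by (simp add: powr_mult add.commute)
  have b: "enhg_weight (Suc k) nu1 nu2 alpha beta k = Gamma (nu1 + real k) powr beta * (nu2 powr beta * Gamma nu2 powr beta) / (fact k) powr alpha"
    unfolding enhg_weight_def using gstep[OF assms(2), of 0] g assms
    by (simp add: powr_mult Suc_diff_le)
  show ?thesis unfolding a b using g by (simp add: field_simps)
qed

lemma wY:
  assumes "nu1 > 0" "nu2 > 0"
  shows "enhg_weight (Suc k) nu1 nu2 alpha beta 0 * nu1 powr beta * (real k + 1) powr alpha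
     = enhg_weight (Suc k) nu1 nu2 alpha beta 1 * (nu2 + real k) powr beta"
proof -
  have g: "Gamma (nu2 + real k) > 0" "Gamma nu1 > 0" using assms by (auto intro!: Gamma_real_pos add_pos_nonneg)
  have a: "enhg_weight (Suc k) nu1 nu2 alpha beta 0 = Gamma nu1 powr beta * ((nu2 + real k) powr beta * Gamma (nu2 + real k) powr beta) / ((real k + 1) powr alpha * (fact k) powr alpha)"
    unfolding enhg_weight_def using gstep[OF assms(2), of k] g assms
    by (simp add: powr_mult add.commute)
  have b: "enhg_weight (Suc k) nu1 nu2 alpha beta 1 = (nu1 powr beta * Gamma nu1 powr beta) * Gamma (nu2 + real k) powr beta / (fact k) powr alpha"
    unfolding enhg_weight_def using gstep[OF assms(1), of 0] g assms
    by (simp add: powr_mult)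
  show ?thesis unfolding a b using g by (simp add: field_simps)
qed
theorem theoremB:
  fixes M :: "'a measure" and X Y :: "'a \<Rightarrow> nat"
    and nu1 nu2 alpha beta :: real
  assumes "prob_space M"
    and "nu1 > 0" and "nu2 > 0" and "alpha \<ge> 0" and "beta \<ge> 0"
    and "prob_space.indep_var M (count_space UNIV) X (count_space UNIV) Y"
    and "\<And>x. measure M {\<omega> \<in> space M. X \<omega> = x} > 0"
    and "\<And>y. measure M {\<omega> \<in> space M. Y \<omega> = y} > 0"
    and "\<And>s k. k \<le> s \<Longrightarrow>
           measure M {\<omega> \<in> space M. X \<omega> = k \<and> X \<omega> + Y \<omega> = s}
             / measure M {\<omega> \<in> space M. X \<omega> + Y \<omega> = s}
           = enhg_pmf s nu1 nu2 alpha beta k"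
  shows "\<exists>p>0.
           (\<forall>x. measure M {\<omega> \<in> space M. X \<omega> = x}
                  = measure M {\<omega> \<in> space M. X \<omega> = 0} * ecomp_weight nu1 p alpha beta x) \<and>
           (\<forall>y. measure M {\<omega> \<in> space M. Y \<omega> = y}
                  = measure M {\<omega> \<in> space M. Y \<omega> = 0} * ecomp_weight nu2 p alpha beta y)"
proof -
  define f where "f = (\<lambda>x. measure M {\<omega> \<in> space M. X \<omega> = x})"
  define g where "g = (\<lambda>x. measure M {\<omega> \<in> space M. Y \<omega> = x})"
  define w where "w = enhg_weight"
  have fp: "\<And>x. f x > 0" using assms(7) f_def by simp
  have gp: "\<And>x. g x > 0" using assms(8) g_def by simp
  note cr = cross[OF assms(1,6) f_def g_def assms(2,3) assms(9)]
  have wpos: "\<And>s j. w s nu1 nu2 alpha beta j > 0"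
  proof -
    fix s j
    have "Gamma (nu1 + real j) > 0" "Gamma (nu2 + real (s-j)) > 0" using assms(2,3)
      by (auto intro!: Gamma_real_pos add_pos_nonneg)
    thus "w s nu1 nu2 alpha beta j > 0" unfolding w_def enhg_weight_def
      by (intro divide_pos_pos) (auto simp: powr_gt_zero)
  qed
  define p where "p = g 1 / (g 0 * nu2 powr beta)"
  have n2: "nu2 powr beta > 0" "nu1 powr beta > 0" using assms(2,3) by auto
  have pp: "p > 0" unfolding p_def using gp n2 by simp
  have kp: "\<And>k::nat. (real k + 1) powr alpha > 0" by simp
  have fX: "f x = f 0 * ecomp_weight nu1 p alpha beta x" for x
  proof (induction x)
    case 0 then show ?case using Gamma_real_pos[OF assms(2)] Gamma_real_pos[OF assms(3)] by (simp add: ecomp_weight_def)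
  next
    case (Suc k)
    have r: "f (Suc k) * g 0 * w (Suc k) nu1 nu2 alpha beta k = f k * g 1 * w (Suc k) nu1 nu2 alpha beta (Suc k)"
      using cr[of "Suc k" "Suc k" k] unfolding w_def by simp
    have r2: "w (Suc k) nu1 nu2 alpha beta (Suc k) * nu2 powr beta * (real k + 1) powr alpha
     = w (Suc k) nu1 nu2 alpha beta k * (nu1 + real k) powr beta" unfolding w_def by (rule wX[OF assms(2,3)])
    have "f (Suc k) = f k * (p * (nu1 + real k) powr beta / (real k + 1) powr alpha)"
    proof -
      have "f (Suc k) * g 0 * w (Suc k) nu1 nu2 alpha beta k * (nu2 powr beta * (real k + 1) powr alpha)
         = f k * g 1 * (w (Suc k) nu1 nu2 alpha beta (Suc k) * nu2 powr beta * (real k + 1) powr alpha)"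
        using r by simp
      also have "\<dots> = f k * g 1 * w (Suc k) nu1 nu2 alpha beta k * (nu1 + real k) powr beta" using r2 by simp
      finally show ?thesis unfolding p_def using wpos[of "Suc k" k] gp[of 0] n2 kp[of k]
        by (simp add: field_simps)
    qed
    then show ?case using Suc.IH ecw_step[OF assms(2), of p alpha beta k] by simp
  qed
  have f1: "f 1 = f 0 * (p * nu1 powr beta)"
    using fX[of 1] ecw_step[OF assms(2), of p alpha beta 0] Gamma_real_pos[OF assms(2)] by (simp add: ecomp_weight_def) (metis times_divide_eq_right)
  have gY: "g y = g 0 * ecomp_weight nu2 p alpha beta y" for y
  proof (induction y)
    case 0 then show ?case using Gamma_real_pos[OF assms(2)] Gamma_real_pos[OF assms(3)] by (simp add: ecomp_weight_def)
  next
    case (Suc k)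
    have r: "f 0 * g (Suc k) * w (Suc k) nu1 nu2 alpha beta 1 = f 1 * g k * w (Suc k) nu1 nu2 alpha beta 0"
      using cr[of 0 "Suc k" 1] unfolding w_def by simp
    have r2: "w (Suc k) nu1 nu2 alpha beta 0 * nu1 powr beta * (real k + 1) powr alpha
     = w (Suc k) nu1 nu2 alpha beta 1 * (nu2 + real k) powr beta" unfolding w_def by (rule wY[OF assms(2,3)])
    have "g (Suc k) = g k * (p * (nu2 + real k) powr beta / (real k + 1) powr alpha)"
    proof -
      have "f 0 * g (Suc k) * w (Suc k) nu1 nu2 alpha beta 1 * (nu1 powr beta * (real k + 1) powr alpha)
         = f 0 * (p * nu1 powr beta) * g k * (w (Suc k) nu1 nu2 alpha beta 0 * nu1 powr beta * (real k + 1) powr alpha)"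
        using r f1 by (simp add: ac_simps)
      also have "\<dots> = f 0 * (p * nu1 powr beta) * g k * w (Suc k) nu1 nu2 alpha beta 1 * (nu2 + real k) powr beta" using r2 by simp
      finally show ?thesis using wpos[of "Suc k" 1] fp[of 0] n2 kp[of k]
        by (simp add: field_simps)
    qed
    then show ?case using Suc.IH ecw_step[OF assms(3), of p alpha beta k] by simp
  qed
  show ?thesis using pp fX gY unfolding f_def g_def by blast
qed

end
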